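(* Let $G$ be a finite digraph such that $\mathrm{Pol}(G)\models\Sigma_M$ and $\mathrm{Pol}(G)\models\Sigma_p$ for every prime $p$. Then every minor condition satisfied by $\mathrm{Pol}(P_2)$ is also satisfied by $\mathrm{Pol}(G)$; i.e. $\Sigma(P_2)\subseteq\Sigma(G)$.
   Context: A digraph is $(V,E)$ with $E\subseteq V^2$. A polymorphism of arity $k$ of $H$ is a homomorphism $H^k\to H$ (where $H^k$ has vertices $V^k$ and edges $((u_i),(v_i))$ with $(u_i,v_i)\in E$ for all $i$); $\mathrm{Pol}(H)$ is the set of polymorphisms. For $f:V^k\to V$ and $\sigma:\{1,\dots,k\}\to\{1,\dots,n\}$, the minor $f_\sigma$ is $(x_1,\dots,x_n)\mapsto f(x_{\sigma(1)},\dots,x_{\sigma(k)})$. A minor condition is a set of formal equations $f_\sigma=g_\tau$ between function symbols (with arities) and maps $\sigma,\tau$; a set of operations $F$ satisfies it ($F\models\Sigma$) if the symbols can be interpreted by operations in $F$ of the right arities so that all equations hold identically. $\Sigma(H)$ is the class of minor conditions satisfied by $\mathrm{Pol}(H)$. $\Sigma_n$ is the condition $f(x_1,\dots,x_n)=f(x_2,\dots,x_n,x_1)$ for an $n$-ary $f$; $\Sigma_M$ is the condition $f(y,y,x)=f(x,x,x)=f(x,y,y)$ for a ternary $f$. $P_2$ has vertices $\{0,1\}$ and the single edge $(0,1)$. *)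

theory Defs
  imports Main "HOL-Computational_Algebra.Primes"
begin

text \<open>A digraph is given by a vertex set V and an edge relation E \<subseteq> V \<times> V.
  Tuples of length k are lists of length k; positions are 0-indexed.\<close>

definition digraph :: "'a set \<Rightarrow> ('a \<times> 'a) set \<Rightarrow> bool" where
  "digraph V E \<longleftrightarrow> E \<subseteq> V \<times> V"

definition tuples :: "'a set \<Rightarrow> nat \<Rightarrow> 'a list set" where
  "tuples V k = {xs. length xs = k \<and> set xs \<subseteq> V}"

text \<open>Polymorphisms of arity k: homomorphisms H^k \<rightarrow> H (only their values on V^k matter).\<close>
definition Pol :: "'a set \<Rightarrow> ('a \<times> 'a) set \<Rightarrow> nat \<Rightarrow> ('a list \<Rightarrow> 'a) set" where
  "Pol V E k = {f. (\<forall>xs \<in> tuples V k. f xs \<in> V) \<and>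
     (\<forall>xs \<in> tuples V k. \<forall>ys \<in> tuples V k.
        (\<forall>i<k. (xs ! i, ys ! i) \<in> E) \<longrightarrow> (f xs, f ys) \<in> E)}"

definition minor :: "('a list \<Rightarrow> 'a) \<Rightarrow> nat \<Rightarrow> (nat \<Rightarrow> nat) \<Rightarrow> 'a list \<Rightarrow> 'a" where
  "minor f k \<sigma> xs = f (map (\<lambda>i. xs ! \<sigma> i) [0..<k])"

text \<open>A minor condition over symbols of type 's with arity function ar is a finite set of
  formal equations (f, \<sigma>, g, \<tau>, n) meaning f_\<sigma> = g_\<tau> where both sides are n-ary,
  \<sigma> : {0..<ar f} \<rightarrow> {0..<n}, \<tau> : {0..<ar g} \<rightarrow> {0..<n}.\<close>
type_synonym 's minor_eq = "'s \<times> (nat \<Rightarrow> nat) \<times> 's \<times> (nat \<Rightarrow> nat) \<times> nat"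

definition minor_condition :: "('s \<Rightarrow> nat) \<Rightarrow> 's minor_eq set \<Rightarrow> bool" where
  "minor_condition ar \<Sigma> \<longleftrightarrow> finite \<Sigma> \<and>
     (\<forall>(f, \<sigma>, g, \<tau>, n) \<in> \<Sigma>. (\<forall>i<ar f. \<sigma> i < n) \<and> (\<forall>i<ar g. \<tau> i < n))"

definition symbols :: "'s minor_eq set \<Rightarrow> 's set" where
  "symbols \<Sigma> = (\<Union>(f, \<sigma>, g, \<tau>, n) \<in> \<Sigma>. {f, g})"

definition Pol_satisfies :: "'a set \<Rightarrow> ('a \<times> 'a) set \<Rightarrow> ('s \<Rightarrow> nat) \<Rightarrow> 's minor_eq set \<Rightarrow> bool" where
  "Pol_satisfies V E ar \<Sigma> \<longleftrightarrow>
     (\<exists>I :: 's \<Rightarrow> ('a list \<Rightarrow> 'a).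
        (\<forall>s \<in> symbols \<Sigma>. I s \<in> Pol V E (ar s)) \<and>
        (\<forall>(f, \<sigma>, g, \<tau>, n) \<in> \<Sigma>. \<forall>xs \<in> tuples V n.
            minor (I f) (ar f) \<sigma> xs = minor (I g) (ar g) \<tau> xs))"

text \<open>\<Sigma>_n: f(x_1,...,x_n) = f(x_2,...,x_n,x_1), one n-ary symbol (of type unit).\<close>
definition Sigma_cyclic :: "nat \<Rightarrow> unit minor_eq set" where
  "Sigma_cyclic n = {((), (\<lambda>i. i), (), (\<lambda>i. (i + 1) mod n), n)}"

text \<open>\<Sigma>_M: f(y,y,x) = f(x,x,x) = f(x,y,y), ternary f; variables x = 0, y = 1.\<close>
definition Sigma_M :: "unit minor_eq set" where
  "Sigma_M = {((), (\<lambda>i. if i < 2 then 1 else 0), (), (\<lambda>i. 0), 2),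
              ((), (\<lambda>i. 0), (), (\<lambda>i. if i = 0 then 0 else 1), 2)}"

text \<open>The digraph P_2: vertices {0,1} (as False/True), single edge 0 \<rightarrow> 1.\<close>
definition P2_V :: "bool set" where "P2_V = UNIV"
definition P2_E :: "(bool \<times> bool) set" where "P2_E = {(False, True)}"

end

theory Submission
  imports Defs "HOL-Computational_Algebra.Primes"
begin

fun relr :: "('a \<times> 'a) set \<Rightarrow> int list \<Rightarrow> ('a \<times> 'a) set" where
  "relr E [] = Id"
| "relr E (a # ps) = (if 0 \<le> a then E ^^ nat a else (E ^^ nat (-a))\<inverse>) O relr E ps"

lemma relr_append: "relr E (as @ bs) = relr E as O relr E bs"
  by (induction as) (auto simp: O_assoc)

lemma relr_mid: "relr E (as @ cs @ bs) = relr E as O relr E cs O relr E bs"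
  by (simp add: relr_append O_assoc)

lemma relr_merge2:
  assumes "0 \<le> a * b"
  shows "relr E [a, b] = relr E [a + b]"
proof -
  consider "a \<ge> 0" "b \<ge> 0" | "a < 0" "b < 0" | "a < 0" "b = 0" | "a = 0" "b < 0"
    using assms unfolding zero_le_mult_iff by (auto simp: le_less)
  then show ?thesis
  proof cases
    case 1
    then have "relr E [a + b] = E ^^ (nat a + nat b)" by (simp add: nat_add_distrib)
    then show ?thesis using 1 by (simp add: relpow_add)
  next
    case 2
    then have "nat (- (a + b)) = nat (-b) + nat (-a)" by simp
    then have "relr E [a + b] = (E ^^ (nat (-b) + nat (-a)))\<inverse>" using 2 by simp
    then show ?thesis using 2 by (simp add: relpow_add converse_relcomp)
  next
    case 3 then show ?thesis by simp
  next
    case 4 then show ?thesis by simp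
  qed
qed

locale qmg =
  fixes V :: "'a set" and E :: "('a \<times> 'a) set" and m :: "'a list \<Rightarrow> 'a"
  assumes EV: "E \<subseteq> V \<times> V"
    and m_V: "x \<in> V \<Longrightarrow> y \<in> V \<Longrightarrow> z \<in> V \<Longrightarrow> m [x, y, z] \<in> V"
    and m_E: "(x1, y1) \<in> E \<Longrightarrow> (x2, y2) \<in> E \<Longrightarrow> (x3, y3) \<in> E \<Longrightarrow> (m [x1, x2, x3], m [y1, y2, y3]) \<in> E"
    and m_q1: "x \<in> V \<Longrightarrow> y \<in> V \<Longrightarrow> m [y, y, x] = m [x, x, x]"
    and m_q2: "x \<in> V \<Longrightarrow> y \<in> V \<Longrightarrow> m [x, y, y] = m [x, x, x]"
begin

definition e :: "'a \<Rightarrow> 'a" where "e x = m [x, x, x]"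

lemma e_V: "x \<in> V \<Longrightarrow> e x \<in> V"
  by (simp add: e_def m_V)

lemma pow_V1: "(x, y) \<in> E ^^ n \<Longrightarrow> x \<in> V \<Longrightarrow> y \<in> V"
  by (induction n arbitrary: y) (use EV in auto)

lemma pow_V2: "(x, y) \<in> E ^^ n \<Longrightarrow> y \<in> V \<Longrightarrow> x \<in> V"
proof (induction n arbitrary: x)
  case 0 then show ?case by simp
next
  case (Suc n)
  then obtain z where "(x, z) \<in> E" using relpow_Suc_D2 by metis
  then show ?case using EV by auto
qed

lemma relr_V: "(x, y) \<in> relr E ps \<Longrightarrow> x \<in> V \<Longrightarrow> y \<in> V"
proof (induction ps arbitrary: x)
  case Nil then show ?case by simp
next
  case (Cons a ps)
  then obtain z where z: "(x, z) \<in> (if 0 \<le> a then E ^^ nat a else (E ^^ nat (-a))\<inverse>)" "(z, y) \<in> relr E ps"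
    by auto
  have "z \<in> V" using z(1) Cons.prems(2) pow_V1 pow_V2 by (auto split: if_splits)
  then show ?case using Cons.IH z(2) by blast
qed

lemma m_pow:
  "(x1, y1) \<in> E ^^ n \<Longrightarrow> (x2, y2) \<in> E ^^ n \<Longrightarrow> (x3, y3) \<in> E ^^ n \<Longrightarrow>
   x1 \<in> V \<Longrightarrow> x2 \<in> V \<Longrightarrow> x3 \<in> V \<Longrightarrow> (m [x1, x2, x3], m [y1, y2, y3]) \<in> E ^^ n"
proof (induction n arbitrary: y1 y2 y3)
  case 0 then show ?case by simp
next
  case (Suc n)
  from Suc.prems obtain z1 z2 z3 where
    "(x1, z1) \<in> E ^^ n" "(z1, y1) \<in> E" "(x2, z2) \<in> E ^^ n" "(z2, y2) \<in> E"
    "(x3, z3) \<in> E ^^ n" "(z3, y3) \<in> E" by auto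
  note z = this
  have "(m [x1, x2, x3], m [z1, z2, z3]) \<in> E ^^ n"
    using Suc.IH[OF z(1) z(3) z(5)] Suc.prems(4-6) by blast
  moreover have "(m [z1, z2, z3], m [y1, y2, y3]) \<in> E" using m_E z(2) z(4) z(6) by blast
  ultimately show ?case by (rule relpow_Suc_I)
qed

lemma e_pow: "(x, y) \<in> E ^^ n \<Longrightarrow> x \<in> V \<Longrightarrow> (e x, e y) \<in> E ^^ n"
  unfolding e_def by (rule m_pow) simp_all

lemma e_relr: "(x, y) \<in> relr E ps \<Longrightarrow> x \<in> V \<Longrightarrow> (e x, e y) \<in> relr E ps"
proof (induction ps arbitrary: x)
  case Nil then show ?case by simp
next
  case (Cons a ps)
  then obtain z where z: "(x, z) \<in> (if 0 \<le> a then E ^^ nat a else (E ^^ nat (-a))\<inverse>)" "(z, y) \<in> relr E ps"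
    by auto
  have zV: "z \<in> V" using z(1) Cons.prems(2) pow_V1 pow_V2 by (auto split: if_splits)
  have "(e x, e z) \<in> (if 0 \<le> a then E ^^ nat a else (E ^^ nat (-a))\<inverse>)"
    using z(1) Cons.prems(2) zV e_pow by (auto split: if_splits)
  moreover have "(e z, e y) \<in> relr E ps" using Cons.IH z(2) zV by blast
  ultimately show ?case by auto
qed

lemma qrect:
  assumes "(x, y) \<in> E ^^ b" "(z, y) \<in> E ^^ b" "(z, w) \<in> E ^^ b" "x \<in> V" "z \<in> V"
  shows "(e x, e w) \<in> E ^^ b"
proof -
  have yV: "y \<in> V" "w \<in> V" using assms pow_V1 by blast+
  have "(m [x, z, z], m [y, y, w]) \<in> E ^^ b" by (rule m_pow) (use assms in simp_all)
  moreover have "m [x, z, z] = e x" using m_q2[OF assms(4) assms(5)] by (simp add: e_def)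
  moreover have "m [y, y, w] = e w" using m_q1[OF yV(2) yV(1)] by (simp add: e_def)
  ultimately show ?thesis by simp
qed


lemma merge_neg:
  assumes "0 < l" "c < 0" "0 < r" "-c \<le> l" "-c \<le> r" "(x, w) \<in> relr E [l, c, r]" "x \<in> V"
  shows "(e x, e w) \<in> relr E [l + c + r]"
proof -
  define L b R where "L = nat l" and "b = nat (-c)" and "R = nat r"
  have bL: "b \<le> L" and bR: "b \<le> R" using assms by (auto simp: L_def b_def R_def)
  from assms obtain y z where 1: "(x, y) \<in> E ^^ L" "(z, y) \<in> E ^^ b" "(z, w) \<in> E ^^ R"
    by (auto simp: L_def b_def R_def)
  have "E ^^ L = E ^^ (L - b) O E ^^ b" using bL by (metis le_add_diff_inverse2 relpow_add)
  with 1 obtain x1 where x1: "(x, x1) \<in> E ^^ (L - b)" "(x1, y) \<in> E ^^ b" by auto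
  have "E ^^ R = E ^^ b O E ^^ (R - b)" using bR by (metis le_add_diff_inverse relpow_add)
  with 1 obtain w1 where w1: "(z, w1) \<in> E ^^ b" "(w1, w) \<in> E ^^ (R - b)" by auto
  have x1V: "x1 \<in> V" using x1 assms(7) pow_V1 by blast
  have yV: "y \<in> V" using x1 x1V pow_V1 by blast
  have zV: "z \<in> V" using 1 yV pow_V2 by blast
  have w1V: "w1 \<in> V" using w1 zV pow_V1 by blast
  have a: "(e x1, e w1) \<in> E ^^ b" using qrect[OF x1(2) 1(2) w1(1) x1V zV] .
  have b: "(e x, e x1) \<in> E ^^ (L - b)" using e_pow x1(1) assms(7) by blast
  have c: "(e w1, e w) \<in> E ^^ (R - b)" using e_pow w1(2) w1V by blast
  have "(e x, e w) \<in> E ^^ ((L - b) + b + (R - b))" using a b c by (auto simp: relpow_add)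
  moreover have "nat (l + c + r) = (L - b) + b + (R - b)" using assms by (simp add: L_def b_def R_def)
  moreover have "0 \<le> l + c + r" using assms by simp
  ultimately show ?thesis by simp
qed

lemma merge_pos:
  assumes "l < 0" "0 < c" "r < 0" "c \<le> -l" "c \<le> -r" "(x, w) \<in> relr E [l, c, r]" "x \<in> V"
  shows "(e x, e w) \<in> relr E [l + c + r]"
proof -
  define L C R where "L = nat (-l)" and "C = nat c" and "R = nat (-r)"
  have CL: "C \<le> L" and CR: "C \<le> R" using assms by (auto simp: L_def C_def R_def)
  from assms obtain y z where 1: "(y, x) \<in> E ^^ L" "(y, z) \<in> E ^^ C" "(w, z) \<in> E ^^ R"
    by (auto simp: L_def C_def R_def)
  have "E ^^ L = E ^^ C O E ^^ (L - C)" using CL by (metis le_add_diff_inverse relpow_add)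
  with 1 obtain y1 where y1: "(y, y1) \<in> E ^^ C" "(y1, x) \<in> E ^^ (L - C)" by auto
  have "E ^^ R = E ^^ (R - C) O E ^^ C" using CR by (metis le_add_diff_inverse2 relpow_add)
  with 1 obtain w1 where w1: "(w, w1) \<in> E ^^ (R - C)" "(w1, z) \<in> E ^^ C" by auto
  have y1V: "y1 \<in> V" using y1 assms(7) pow_V2 by blast
  have yV: "y \<in> V" using y1 y1V pow_V2 by blast
  have zV: "z \<in> V" using 1 yV pow_V1 by blast
  have w1V: "w1 \<in> V" using w1 zV pow_V2 by blast
  have wV: "w \<in> V" using w1 w1V pow_V2 by blast
  have a: "(e w1, e y1) \<in> E ^^ C" using qrect[OF w1(2) 1(2) y1(1) w1V yV] .
  have b: "(e y1, e x) \<in> E ^^ (L - C)" using e_pow y1(2) y1V by blast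
  have c: "(e w, e w1) \<in> E ^^ (R - C)" using e_pow w1(1) wV by blast
  have "(e w, e x) \<in> E ^^ ((R - C) + C + (L - C))" using a b c by (auto simp: relpow_add)
  moreover have "nat (- (l + c + r)) = (R - C) + C + (L - C)" using assms by (simp add: L_def C_def R_def)
  moreover have "\<not> 0 \<le> l + c + r" using assms by simp
  ultimately show ?thesis by simp
qed

definition mu :: "int list \<Rightarrow> nat" where
  "mu ps = sum_list (map (\<lambda>a. nat \<bar>a\<bar>) ps) + length ps"

lemma mu_simps [simp]: "mu [] = 0" "mu (a # ps) = nat \<bar>a\<bar> + 1 + mu ps"
  "mu (as @ bs) = mu as + mu bs"
  by (auto simp: mu_def)

lemma split2: "Suc k < length xs \<Longrightarrow> xs = take k xs @ xs ! k # xs ! Suc k # drop (Suc (Suc k)) xs"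
  by (metis Cons_nth_drop_Suc Suc_lessD append_take_drop_id)

lemma split3: "Suc (Suc k) < length xs \<Longrightarrow> xs = take k xs @ [xs ! k, xs ! Suc k, xs ! Suc (Suc k)] @ drop (Suc (Suc (Suc k))) xs"
  by (simp add: Cons_nth_drop_Suc)

lemma relr_single_pos: "0 \<le> a \<Longrightarrow> relr E [a] = E ^^ nat a" by simp

lemma key:
  "(x, y) \<in> relr E ps \<Longrightarrow> x \<in> V \<Longrightarrow> int d \<le> sum_list ps \<Longrightarrow> \<exists>u\<in>V. \<exists>v. (u, v) \<in> E ^^ d"
proof (induction "mu ps" arbitrary: ps x y rule: less_induct)
  case less
  consider (short) "length ps \<le> 1"
    | (adj) as a b bs where "ps = as @ a # b # bs" "0 \<le> a * b"
    | (alt) "2 \<le> length ps" "\<forall>as a b bs. ps = as @ a # b # bs \<longrightarrow> a * b < 0"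
  proof (cases "length ps \<le> 1")
    case True then show ?thesis using that(1) by blast
  next
    case False
    show ?thesis
    proof (cases "\<exists>as a b bs. ps = as @ a # b # bs \<and> 0 \<le> a * b")
      case True then show ?thesis using that(2) by blast
    next
      case F2: False
      have "2 \<le> length ps" using False by simp
      moreover have "\<forall>as a b bs. ps = as @ a # b # bs \<longrightarrow> a * b < 0" 
      proof (intro allI impI)
        fix as a b bs assume "ps = as @ a # b # bs"
        then show "a * b < 0" using F2 not_le by blast
      qed
      ultimately show ?thesis using that(3) by blast
    qed
  qed
  then show ?case
  proof cases
    case short
    then consider "ps = []" | a where "ps = [a]"
      by (metis One_nat_def le_Suc_eq le_zero_eq length_0_conv length_Suc_conv)
    then show ?thesis
    proof cases
      case 1 then show ?thesis using less.prems by auto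
    next
      case 2
      then have a0: "0 \<le> a" "d \<le> nat a" using less.prems by auto
      then have "(x, y) \<in> E ^^ (d + (nat a - d))" using less.prems 2 by auto
      then show ?thesis using less.prems(2) by (auto simp: relpow_add)
    qed
  next
    case adj
    let ?ps = "as @ (a + b) # bs"
    have "relr E ps = relr E as O relr E [a, b] O relr E bs"
      using adj(1) relr_mid[of E as "[a, b]" bs] by (simp del: relr.simps)
    also have "\<dots> = relr E as O relr E [a + b] O relr E bs" by (simp only: relr_merge2[OF adj(2)])
    also have "\<dots> = relr E ?ps" using relr_mid[of E as "[a + b]" bs] by (simp del: relr.simps)
    finally have r: "(x, y) \<in> relr E ?ps" using less.prems by simp
    have "nat \<bar>a + b\<bar> \<le> nat \<bar>a\<bar> + nat \<bar>b\<bar>" by linarith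
    then have "mu ?ps < mu ps" using adj by simp
    then show ?thesis using less.hyps r less.prems adj by fastforce
  next
    case alt
    have altk: "ps ! k * ps ! Suc k < 0" if "Suc k < length ps" for k
    proof -
      have "ps = take k ps @ ps ! k # ps ! Suc k # drop (Suc (Suc k)) ps" by (rule split2[OF that])
      then show ?thesis using alt(2) by blast
    qed
    have ne: "ps \<noteq> []" using alt(1) by auto
    consider (hneg) "hd ps < 0" | (lneg) "last ps < 0" | (pos) "0 \<le> hd ps" "0 \<le> last ps" by linarith
    then show ?thesis
    proof cases
      case hneg
      obtain a rest where eq: "ps = a # rest" using ne by (cases ps) auto
      have a0: "a < 0" using hneg eq by simp
      have "(x, y) \<in> (E ^^ nat (- a))\<inverse> O relr E rest" using less.prems(1) eq a0 by simp
      then obtain z where z: "(z, x) \<in> E ^^ nat (- a)" "(z, y) \<in> relr E rest" by blast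
      have zV: "z \<in> V" using z(1) less.prems(2) pow_V2 by blast
      have "mu rest < mu ps" using eq by simp
      moreover have "int d \<le> sum_list rest" using less.prems(3) a0 eq by simp
      ultimately show ?thesis using less.hyps z(2) zV by blast
    next
      case lneg
      obtain rest a where eq: "ps = rest @ [a]" using ne by (cases ps rule: rev_exhaust) auto
      have a0: "a < 0" using lneg eq by simp
      have "(x, y) \<in> relr E rest O relr E [a]" using less.prems(1) eq relr_append by metis
      then obtain z where z: "(x, z) \<in> relr E rest" by blast
      have "mu rest < mu ps" using eq by simp
      moreover have "int d \<le> sum_list rest" using less.prems(3) a0 eq by simp
      ultimately show ?thesis using less.hyps z less.prems(2) by blast
    next
      case pos
      have fin: "finite ((\<lambda>j. \<bar>ps ! j\<bar>) ` {..<length ps})" by simp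
      have nemp: "(\<lambda>j. \<bar>ps ! j\<bar>) ` {..<length ps} \<noteq> {}" using ne by (simp add: lessThan_empty_iff)
      obtain i where i: "i < length ps" "Min ((\<lambda>j. \<bar>ps ! j\<bar>) ` {..<length ps}) = \<bar>ps ! i\<bar>"
        using Min_in[OF fin nemp] by auto
      have imin: "\<bar>ps ! i\<bar> \<le> \<bar>ps ! j\<bar>" if "j < length ps" for j
      proof -
        have "\<bar>ps ! j\<bar> \<in> (\<lambda>j. \<bar>ps ! j\<bar>) ` {..<length ps}" using that by simp
        then show ?thesis using Min_le[OF fin] i(2) by metis
      qed
      consider (first) "i = 0" | (last) "Suc i = length ps" "i \<noteq> 0" | (mid) "0 < i" "Suc i < length ps"
        using i(1) by linarith
      then show ?thesis
      proof cases
        case first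
        obtain a b rest where eq: "ps = a # b # rest" using alt(1)
          by (cases ps; cases "tl ps") auto
        have a0: "0 \<le> a" using pos(1) eq by simp
        have ab: "a * b < 0" using altk[of 0] eq by simp
        have mn: "\<bar>a\<bar> \<le> \<bar>b\<bar>" using imin[of 1] first eq by simp
        have s: "a + b \<le> 0" using a0 ab mn by (smt (verit) mult_nonneg_nonneg)
        have "(x, y) \<in> relr E [a, b] O relr E rest" using less.prems(1) eq relr_append[of E "[a, b]" rest] by simp
        then obtain z where z: "(x, z) \<in> relr E [a, b]" "(z, y) \<in> relr E rest" by blast
        have zV: "z \<in> V" using z(1) less.prems(2) relr_V by blast
        have "mu rest < mu ps" using eq by simp
        moreover have "int d \<le> sum_list rest" using less.prems(3) s eq by simp
        ultimately show ?thesis using less.hyps z(2) zV by blast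
      next
        case last
        obtain rest b where eq1: "ps = rest @ [b]" using ne by (cases ps rule: rev_exhaust) auto
        have "rest \<noteq> []" using eq1 alt(1) by auto
        then obtain rest' a where eq2: "rest = rest' @ [a]" by (cases rest rule: rev_exhaust) auto
        have eq: "ps = rest' @ [a, b]" using eq1 eq2 by simp
        have b0: "0 \<le> b" using pos(2) eq by simp
        have il: "i = Suc (length rest')" using last eq by simp
        have ab: "a * b < 0" using altk[of "length rest'"] eq by (simp add: nth_append)
        have mn: "\<bar>b\<bar> \<le> \<bar>a\<bar>" using imin[of "length rest'"] il eq by (simp add: nth_append)
        have s: "a + b \<le> 0" using b0 ab mn by (smt (verit) mult_nonneg_nonneg)
        have "(x, y) \<in> relr E rest' O relr E [a, b]" using less.prems(1) eq relr_append[of E rest' "[a, b]"] by simp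
        then obtain z where z: "(x, z) \<in> relr E rest'" by blast
        have "mu rest' < mu ps" using eq by simp
        moreover have "int d \<le> sum_list rest'" using less.prems(3) s eq by simp
        ultimately show ?thesis using less.hyps z less.prems(2) by blast
      next
        case mid
        define k where "k = i - 1"
        have ki: "Suc k = i" using mid by (simp add: k_def)
        define l c r where "l = ps ! k" and "c = ps ! Suc k" and "r = ps ! Suc (Suc k)"
        define as bs where "as = take k ps" and "bs = drop (Suc (Suc (Suc k))) ps"
        have lt: "Suc (Suc k) < length ps" using mid ki by simp
        have eq: "ps = as @ [l, c, r] @ bs"
          unfolding as_def bs_def l_def c_def r_def by (rule split3[OF lt])
        have lc: "l * c < 0" using altk[of k] lt by (simp add: l_def c_def)
        have cr: "c * r < 0" using altk[of "Suc k"] lt by (simp add: r_def c_def)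
        have cl: "\<bar>c\<bar> \<le> \<bar>l\<bar>" using imin[of k] ki lt by (simp add: l_def c_def)
        have cr2: "\<bar>c\<bar> \<le> \<bar>r\<bar>" using imin[of "Suc (Suc k)"] ki lt by (simp add: r_def c_def)
        have "(x, y) \<in> relr E as O relr E [l, c, r] O relr E bs"
          using less.prems(1) eq relr_mid[of E as "[l, c, r]" bs] by simp
        then obtain a1 b1 where ab: "(x, a1) \<in> relr E as" "(a1, b1) \<in> relr E [l, c, r]"
            "(b1, y) \<in> relr E bs" by blast
        have a1V: "a1 \<in> V" using ab(1) less.prems(2) relr_V by blast
        have b1V: "b1 \<in> V" using ab(2) a1V relr_V by blast
        have m1: "(e a1, e b1) \<in> relr E [l + c + r]"
        proof (cases "c < 0")
          case True
          then have "0 < l" "0 < r" using lc cr by (auto simp: mult_less_0_iff)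
          then show ?thesis using merge_neg[OF _ True _ _ _ ab(2) a1V] cl cr2 True by simp
        next
          case False
          then have "0 < c" using lc by (cases "c = 0") auto
          then have "l < 0" "r < 0" using lc cr by (auto simp: mult_less_0_iff)
          then show ?thesis using merge_pos[OF _ \<open>0 < c\<close> _ _ _ ab(2) a1V] cl cr2 \<open>0 < c\<close> by simp
        qed
        have m0: "(e x, e a1) \<in> relr E as" using e_relr ab(1) less.prems(2) by blast
        have m2: "(e b1, e y) \<in> relr E bs" using e_relr ab(3) b1V by blast
        let ?ps = "as @ [l + c + r] @ bs"
        have rr: "(e x, e y) \<in> relr E ?ps" using m0 m1 m2 relr_mid[of E as "[l + c + r]" bs] by blast
        have "nat \<bar>l + c + r\<bar> \<le> nat \<bar>l\<bar> + nat \<bar>c\<bar> + nat \<bar>r\<bar>" by linarith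
        then have "mu ?ps < mu ps" using eq by simp
        moreover have "int d \<le> sum_list ?ps" using eq less.prems(3) by simp
        moreover have "e x \<in> V" using e_V less.prems(2) by blast
        ultimately show ?thesis using less.hyps rr by blast
      qed
    qed
  qed
qed

end

lemma cycle_loop:
  assumes cyc: "\<And>p. prime p \<Longrightarrow> \<exists>f. f \<in> Pol V E p \<and>
      (\<forall>xs \<in> tuples V p. f xs = f (map (\<lambda>i. xs ! ((i + 1) mod p)) [0..<p]))"
  shows "0 < L \<Longrightarrow> (\<forall>k. w k \<in> V) \<Longrightarrow> (\<forall>k. (w k, w (Suc k)) \<in> E) \<Longrightarrow> (\<forall>k. w (k + L) = w k)
    \<Longrightarrow> \<exists>c. (c, c) \<in> E"
proof (induction L arbitrary: w rule: less_induct)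
  case (less L)
  show ?case
  proof (cases "L = 1")
    case True
    then have "w 1 = w 0" using less.prems(4)[rule_format, of 0] by simp
    then show ?thesis using less.prems(3)[rule_format, of 0] by auto
  next
    case False
    obtain p where p: "prime p" "p dvd L" using prime_factor_nat[OF False] by blast
    then obtain q where Lpq: "L = p * q" by blast
    have p2: "2 \<le> p" using p(1) by (simp add: prime_ge_2_nat)
    have q0: "0 < q" using Lpq less.prems(1) by simp
    have qL: "q < L" using Lpq p2 q0 by simp
    obtain f where f: "f \<in> Pol V E p" "\<forall>xs \<in> tuples V p. f xs = f (map (\<lambda>i. xs ! ((i + 1) mod p)) [0..<p])"
      using cyc[OF p(1)] by blast
    define t where "t j = map (\<lambda>i. w (j + i * q)) [0..<p]" for j
    have tV: "t j \<in> tuples V p" for j using less.prems(2) by (auto simp: t_def tuples_def)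
    have tE: "(f (t j), f (t (Suc j))) \<in> E" for j
    proof -
      have "\<forall>i<p. (t j ! i, t (Suc j) ! i) \<in> E" using less.prems(3) by (simp add: t_def)
      then show ?thesis using f(1) tV unfolding Pol_def by blast
    qed
    have fV: "f (t j) \<in> V" for j using f(1) tV unfolding Pol_def by blast
    have rot: "map (\<lambda>i. t j ! ((i + 1) mod p)) [0..<p] = t (j + q)" for j
    proof (rule nth_equalityI)
      show "length (map (\<lambda>i. t j ! ((i + 1) mod p)) [0..<p]) = length (t (j + q))" by (simp add: t_def)
    next
      fix i assume "i < length (map (\<lambda>i. t j ! ((i + 1) mod p)) [0..<p])"
      then have ip: "i < p" by simp
      show "map (\<lambda>i. t j ! ((i + 1) mod p)) [0..<p] ! i = t (j + q) ! i"
      proof (cases "i + 1 < p")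
        case True
        then show ?thesis using ip by (simp add: t_def algebra_simps)
      next
        case False
        then have ii: "i + 1 = p" using ip by simp
        then have "j + q + i * q = j + L" using Lpq by (metis add.assoc add.commute mult_Suc Suc_eq_plus1)
        then have "w (j + q + i * q) = w j" using less.prems(4) by metis
        then show ?thesis using ii ip p2 by (simp add: t_def)
      qed
    qed
    have per: "f (t (k + q)) = f (t k)" for k
      using f(2) tV rot by (metis add.commute)
    have "\<exists>c. (c, c) \<in> E"
      by (rule less.IH[OF qL q0, of "\<lambda>j. f (t j)"]) (use fV tE per in auto)
    then show ?thesis .
  qed
qed

lemma long_walk_cycle:
  assumes "finite V" "E \<subseteq> V \<times> V" "(a, b) \<in> E ^^ n" "card V \<le> n" "0 < n"
  shows "\<exists>L w. 0 < L \<and> (\<forall>k. w k \<in> V) \<and> (\<forall>k. (w k, w (Suc k)) \<in> E) \<and> (\<forall>k. w (k + L) = w k)"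
proof -
  obtain f where f: "f 0 = a" "f n = b" "\<forall>i<n. (f i, f (Suc i)) \<in> E"
    using assms(3) relpow_fun_conv by metis
  have fV: "f i \<in> V" if "i \<le> n" for i
  proof (cases "i < n")
    case True then show ?thesis using f(3) assms(2) by blast
  next
    case False
    then have "i = Suc (n - 1)" using that assms(5) by simp
    moreover have "n - 1 < n" using assms(5) by simp
    then have "(f (n - 1), f (Suc (n - 1))) \<in> E" using f(3) by blast
    ultimately show ?thesis using assms(2) by blast
  qed
  have "f ` {..n} \<subseteq> V" using fV by auto
  then have "card (f ` {..n}) \<le> card V" using assms(1) by (simp add: card_mono)
  then have "\<not> inj_on f {..n}" using assms(4) by (metis card_atMost card_image not_less_eq_eq)
  then obtain i j where ij: "i \<le> n" "j \<le> n" "i < j" "f i = f j"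
    unfolding inj_on_def by (metis atMost_iff linorder_neqE_nat)
  define L where "L = j - i"
  define w where "w k = f (i + k mod L)" for k
  have L0: "0 < L" using ij by (simp add: L_def)
  have "\<forall>k. w k \<in> V"
  proof
    fix k have "k mod L < L" using L0 by simp
    then have "i + k mod L \<le> n" using ij unfolding L_def by linarith
    then show "w k \<in> V" using fV by (simp add: w_def)
  qed
  moreover have "\<forall>k. (w k, w (Suc k)) \<in> E"
  proof
    fix k
    have lt: "k mod L < L" using L0 by simp
    show "(w k, w (Suc k)) \<in> E"
    proof (cases "Suc (k mod L) = L")
      case True
      then have "Suc k mod L = 0" by (simp add: mod_Suc)
      moreover have "i + k mod L < n" using lt ij unfolding L_def by linarith
      then have "(f (i + k mod L), f (Suc (i + k mod L))) \<in> E" using f(3) by blast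
      moreover have "Suc (i + k mod L) = j" using True ij by (simp add: L_def)
      ultimately show ?thesis using ij by (simp add: w_def)
    next
      case False
      then have "Suc k mod L = Suc (k mod L)" by (simp add: mod_Suc)
      moreover have "i + k mod L < n" using lt ij unfolding L_def by linarith
      then have "(f (i + k mod L), f (Suc (i + k mod L))) \<in> E" using f(3) by blast
      ultimately show ?thesis by (simp add: w_def)
    qed
  qed
  moreover have "\<forall>k. w (k + L) = w k" by (simp add: w_def)
  ultimately show ?thesis using L0 by blast
qed


lemma SigmaM_extract:
  assumes "Pol_satisfies V E (\<lambda>_. 3) Sigma_M"
  shows "\<exists>m. m \<in> Pol V E 3 \<and> (\<forall>x\<in>V. \<forall>y\<in>V. m [y, y, x] = m [x, x, x] \<and> m [x, y, y] = m [x, x, x])"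
proof -
  obtain I where I: "\<forall>s\<in>symbols Sigma_M. I s \<in> Pol V E 3"
    "\<forall>(f, \<sigma>, g, \<tau>, n)\<in>Sigma_M. \<forall>xs\<in>tuples V n. minor (I f) 3 \<sigma> xs = minor (I g) 3 \<tau> xs"
    using assms unfolding Pol_satisfies_def by blast
  have "I () \<in> Pol V E 3" using I(1) by (simp add: symbols_def Sigma_M_def)
  moreover have "\<forall>x\<in>V. \<forall>y\<in>V. I () [y, y, x] = I () [x, x, x] \<and> I () [x, y, y] = I () [x, x, x]"
  proof (intro ballI)
    fix x y assume "x \<in> V" "y \<in> V"
    then have xs: "[x, y] \<in> tuples V 2" by (simp add: tuples_def)
    have e1: "minor (I ()) 3 (\<lambda>i. if i < 2 then 1 else 0) [x, y] = minor (I ()) 3 (\<lambda>i. 0) [x, y]"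
      using I(2) xs unfolding Sigma_M_def by auto
    have e2: "minor (I ()) 3 (\<lambda>i. 0) [x, y] = minor (I ()) 3 (\<lambda>i. if i = 0 then 0 else 1) [x, y]"
      using I(2) xs unfolding Sigma_M_def by auto
    have u: "[0..<3] = [0, 1, 2::nat]" by (simp add: upt_rec)
    show "I () [y, y, x] = I () [x, x, x] \<and> I () [x, y, y] = I () [x, x, x]"
      using e1 e2 by (simp add: minor_def u)
  qed
  ultimately show ?thesis by blast
qed

lemma Pol3_qmg:
  assumes "digraph V E" "m \<in> Pol V E 3"
    "\<forall>x\<in>V. \<forall>y\<in>V. m [y, y, x] = m [x, x, x] \<and> m [x, y, y] = m [x, x, x]"
  shows "qmg V E m"
proof
  show EV: "E \<subseteq> V \<times> V" using assms(1) by (simp add: digraph_def)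
  show "x \<in> V \<Longrightarrow> y \<in> V \<Longrightarrow> z \<in> V \<Longrightarrow> m [x, y, z] \<in> V" for x y z
    using assms(2) by (simp add: Pol_def tuples_def)
  show "(m [x1, x2, x3], m [y1, y2, y3]) \<in> E"
    if "(x1, y1) \<in> E" "(x2, y2) \<in> E" "(x3, y3) \<in> E" for x1 y1 x2 y2 x3 y3
  proof -
    have t: "[x1, x2, x3] \<in> tuples V 3" "[y1, y2, y3] \<in> tuples V 3" using that EV by (auto simp: tuples_def)
    have "\<forall>i<3. ([x1, x2, x3] ! i, [y1, y2, y3] ! i) \<in> E"
    proof (intro allI impI)
      fix i :: nat assume "i < 3"
      then have "i = 0 \<or> i = 1 \<or> i = 2" by auto
      then show "([x1, x2, x3] ! i, [y1, y2, y3] ! i) \<in> E" using that by auto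
    qed
    then show ?thesis using assms(2) t unfolding Pol_def by blast
  qed
  show "x \<in> V \<Longrightarrow> y \<in> V \<Longrightarrow> m [y, y, x] = m [x, x, x]" for x y using assms(3) by blast
  show "x \<in> V \<Longrightarrow> y \<in> V \<Longrightarrow> m [x, y, y] = m [x, x, x]" for x y using assms(3) by blast
qed

lemma cyc_extract:
  assumes "Pol_satisfies V E (\<lambda>_. p) (Sigma_cyclic p)"
  shows "\<exists>f. f \<in> Pol V E p \<and> (\<forall>xs \<in> tuples V p. f xs = f (map (\<lambda>i. xs ! ((i + 1) mod p)) [0..<p]))"
proof -
  obtain I where I: "\<forall>s\<in>symbols (Sigma_cyclic p). I s \<in> Pol V E p"
    "\<forall>(f, \<sigma>, g, \<tau>, n)\<in>Sigma_cyclic p. \<forall>xs\<in>tuples V n. minor (I f) p \<sigma> xs = minor (I g) p \<tau> xs"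
    using assms unfolding Pol_satisfies_def by blast
  have "I () \<in> Pol V E p" using I(1) by (simp add: symbols_def Sigma_cyclic_def)
  moreover have "\<forall>xs \<in> tuples V p. I () xs = I () (map (\<lambda>i. xs ! ((i + 1) mod p)) [0..<p])"
  proof
    fix xs assume xs: "xs \<in> tuples V p"
    then have "minor (I ()) p (\<lambda>i. i) xs = minor (I ()) p (\<lambda>i. (i + 1) mod p) xs"
      using I(2) unfolding Sigma_cyclic_def by auto
    moreover have "map (\<lambda>i. xs ! i) [0..<p] = xs" using xs map_nth[of xs] by (simp add: tuples_def)
    ultimately show "I () xs = I () (map (\<lambda>i. xs ! ((i + 1) mod p)) [0..<p])"
      by (simp add: minor_def)
  qed
  ultimately show ?thesis by blast
qed


theorem mainTheorem8:
  fixes V :: "'a set" and E :: "('a \<times> 'a) set"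
  assumes "finite V" and "digraph V E"
    and "Pol_satisfies V E (\<lambda>_. 3) Sigma_M"
    and "\<And>p::nat. prime p \<Longrightarrow> Pol_satisfies V E (\<lambda>_. p) (Sigma_cyclic p)"
  shows "\<forall>(ar :: 's \<Rightarrow> nat) (\<Sigma> :: 's minor_eq set).
           minor_condition ar \<Sigma> \<longrightarrow> Pol_satisfies P2_V P2_E ar \<Sigma> \<longrightarrow> Pol_satisfies V E ar \<Sigma>"
proof (intro allI impI)
  fix ar :: "'s \<Rightarrow> nat" and \<Sigma> :: "'s minor_eq set"
  assume mc: "minor_condition ar \<Sigma>" and p2: "Pol_satisfies P2_V P2_E ar \<Sigma>"
  from p2 obtain J where J: "\<forall>s\<in>symbols \<Sigma>. J s \<in> Pol P2_V P2_E (ar s)"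
    and Jeq: "\<forall>(f, \<sigma>, g, \<tau>, n)\<in>\<Sigma>. \<forall>xs\<in>tuples P2_V n. minor (J f) (ar f) \<sigma> xs = minor (J g) (ar g) \<tau> xs"
    unfolding Pol_satisfies_def by blast
  have EV: "E \<subseteq> V \<times> V" using assms(2) by (simp add: digraph_def)
  have J01: "J s (replicate (ar s) False) = False \<and> J s (replicate (ar s) True) = True"
    if "s \<in> symbols \<Sigma>" for s
  proof -
    have "replicate (ar s) False \<in> tuples P2_V (ar s)" "replicate (ar s) True \<in> tuples P2_V (ar s)"
      by (auto simp: tuples_def P2_V_def)
    moreover have "\<forall>i<ar s. (replicate (ar s) False ! i, replicate (ar s) True ! i) \<in> P2_E"
      by (simp add: P2_E_def)
    ultimately have "(J s (replicate (ar s) False), J s (replicate (ar s) True)) \<in> P2_E"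
      using J that unfolding Pol_def by blast
    then show ?thesis by (simp add: P2_E_def)
  qed
  have ar0: "0 < ar s" if "s \<in> symbols \<Sigma>" for s
    using J01[OF that] by (cases "ar s") auto
  have cyc: "\<exists>f. f \<in> Pol V E p \<and> (\<forall>xs \<in> tuples V p. f xs = f (map (\<lambda>i. xs ! ((i + 1) mod p)) [0..<p]))"
    if "prime p" for p
    using cyc_extract assms(4)[OF that] by blast
  consider (loop) c where "(c, c) \<in> E" | (empty) "E = {}" | (main) "E \<noteq> {}" "\<forall>c. (c, c) \<notin> E" by blast
  then show "Pol_satisfies V E ar \<Sigma>"
  proof cases
    case loop
    have cV: "c \<in> V" using loop EV by blast
    show ?thesis unfolding Pol_satisfies_def
    proof (intro exI[of _ "\<lambda>s xs. c"] conjI)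
      show "\<forall>s\<in>symbols \<Sigma>. (\<lambda>xs. c) \<in> Pol V E (ar s)" using cV loop by (simp add: Pol_def)
      show "\<forall>(f, \<sigma>, g, \<tau>, n)\<in>\<Sigma>. \<forall>xs\<in>tuples V n. minor (\<lambda>xs. c) (ar f) \<sigma> xs = minor (\<lambda>xs. c) (ar g) \<tau> xs"
        by (simp add: minor_def)
    qed
  next
    case empty
    define c where "c = (SOME c. c \<in> V)"
    show ?thesis unfolding Pol_satisfies_def
    proof (intro exI[of _ "\<lambda>s xs. c"] conjI)
      show "\<forall>s\<in>symbols \<Sigma>. (\<lambda>xs. c) \<in> Pol V E (ar s)"
      proof
        fix s assume s: "s \<in> symbols \<Sigma>"
        have "\<forall>xs\<in>tuples V (ar s). c \<in> V"
        proof
          fix xs assume "xs \<in> tuples V (ar s)"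
          then have "xs ! 0 \<in> V" using ar0[OF s] by (auto simp: tuples_def)
          then show "c \<in> V" unfolding c_def by (rule someI)
        qed
        moreover have "\<not> (\<forall>i<ar s. P i)" if "\<And>i. \<not> P i" for P using ar0[OF s] that by blast
        ultimately show "(\<lambda>xs. c) \<in> Pol V E (ar s)" unfolding Pol_def using empty by auto
      qed
      show "\<forall>(f, \<sigma>, g, \<tau>, n)\<in>\<Sigma>. \<forall>xs\<in>tuples V n. minor (\<lambda>xs. c) (ar f) \<sigma> xs = minor (\<lambda>xs. c) (ar g) \<tau> xs"
        by (simp add: minor_def)
    qed
  next
    case main
    obtain m where m: "m \<in> Pol V E 3" "\<forall>x\<in>V. \<forall>y\<in>V. m [y, y, x] = m [x, x, x] \<and> m [x, y, y] = m [x, x, x]"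
      using SigmaM_extract[OF assms(3)] by blast
    interpret Q: qmg V E m by (rule Pol3_qmg[OF assms(2) m(1) m(2)])
    have nolong: "d < card V" if uV0: "u \<in> V" and uvd: "(u, v) \<in> E ^^ d" for u v d
    proof (rule ccontr)
      assume "\<not> d < card V"
      then have dc: "card V \<le> d" by simp
      have "0 < card V" using uV0 assms(1) card_gt_0_iff by blast
      then have "0 < d" using dc by simp
      then obtain L w where Lw: "0 < L" "\<forall>k. w k \<in> V" "\<forall>k. (w k, w (Suc k)) \<in> E" "\<forall>k. w (k + L) = w k"
        using long_walk_cycle[OF assms(1) EV uvd dc] by blast
      obtain c where "(c, c) \<in> E" using cycle_loop[of V E, OF cyc Lw] by blast
      then show False using main(2) by blast
    qed
    define hs where "hs v = {d. \<exists>ps x. x \<in> V \<and> (x, v) \<in> relr E ps \<and> sum_list ps = int d}" for v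
    have hs_bound: "d < card V" if "d \<in> hs v" for d v
    proof -
      from that obtain ps x where px: "x \<in> V" "(x, v) \<in> relr E ps" "sum_list ps = int d"
        unfolding hs_def by blast
      then obtain u w where "u \<in> V" "(u, w) \<in> E ^^ d" using Q.key[of x v ps d] by force
      then show ?thesis using nolong by blast
    qed
    have hs_fin: "finite (hs v)" for v
    proof -
      have "hs v \<subseteq> {..<card V}" using hs_bound by blast
      then show ?thesis using finite_subset by blast
    qed
    have hs0: "0 \<in> hs v" if "v \<in> V" for v
    proof -
      have "v \<in> V \<and> (v, v) \<in> relr E [] \<and> sum_list [] = int 0" using that by simp
      then show ?thesis unfolding hs_def by blast
    qed
    define h where "h v = Max (hs v)" for v
    have h_in: "h v \<in> hs v" if "v \<in> V" for v
      using Max_in[OF hs_fin] hs0[OF that] unfolding h_def by blast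
    have h_ge: "d \<le> h v" if "d \<in> hs v" for d v using Max_ge[OF hs_fin that] unfolding h_def by simp
    have h_edge: "h v = Suc (h u)" if uv: "(u, v) \<in> E" for u v
    proof -
      have uV: "u \<in> V" "v \<in> V" using uv EV by auto
      obtain ps x where px: "x \<in> V" "(x, u) \<in> relr E ps" "sum_list ps = int (h u)"
        using h_in[OF uV(1)] unfolding hs_def by blast
      have "(x, v) \<in> relr E ps O relr E [1]" using px(2) uv by auto
      then have "(x, v) \<in> relr E (ps @ [1])" by (simp only: relr_append)
      moreover have "sum_list (ps @ [1]) = int (Suc (h u))" using px(3) by simp
      ultimately have "Suc (h u) \<in> hs v" using px(1) unfolding hs_def by blast
      then have le1: "Suc (h u) \<le> h v" by (rule h_ge)
      obtain qs y where qy: "y \<in> V" "(y, v) \<in> relr E qs" "sum_list qs = int (h v)"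
        using h_in[OF uV(2)] unfolding hs_def by blast
      have "(y, u) \<in> relr E qs O relr E [-1]" using qy(2) uv by auto
      then have "(y, u) \<in> relr E (qs @ [-1])" by (simp only: relr_append)
      moreover have "sum_list (qs @ [-1]) = int (h v - 1)" using qy(3) le1 by simp
      ultimately have "h v - 1 \<in> hs u" using qy(1) unfolding hs_def by blast
      then have "h v - 1 \<le> h u" by (rule h_ge)
      with le1 show ?thesis by simp
    qed
    obtain a0 b0 where ab0: "(a0, b0) \<in> E" using main(1) by auto
    have Vne: "V \<noteq> {}" using ab0 EV by auto
    define K where "K = Max (h ` V)"
    have hK: "h v \<le> K" if "v \<in> V" for v using assms(1) that unfolding K_def by simp
    have K1: "1 \<le> K" using hK[of b0] h_edge[OF ab0] ab0 EV by auto
    have "K \<in> h ` V" unfolding K_def using assms(1) Vne by (intro Max_in) auto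
    then obtain v0 where v0: "v0 \<in> V" "h v0 = K" by auto
    obtain ps x where px: "x \<in> V" "(x, v0) \<in> relr E ps" "sum_list ps = int K"
      using h_in[OF v0(1)] v0(2) unfolding hs_def by auto
    obtain u w where uw: "u \<in> V" "(u, w) \<in> E ^^ K" using Q.key[OF px(2) px(1)] px(3) by force
    obtain p where p: "p 0 = u" "p K = w" "\<forall>i<K. (p i, p (Suc i)) \<in> E"
      using uw(2) relpow_fun_conv by metis
    have pV: "p i \<in> V" if "i \<le> K" for i
    proof (cases "i < K")
      case True then show ?thesis using p(3) EV by blast
    next
      case False
      then have "i = Suc (K - 1)" using that K1 by simp
      moreover have "K - 1 < K" using K1 by simp
      then have "(p (K - 1), p (Suc (K - 1))) \<in> E" using p(3) by blast
      ultimately show ?thesis using EV by blast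
    qed
    define B where "B t zs = map (\<lambda>y. t < h y) zs" for t zs
    define I where "I s zs = p (\<Sum>t<K. if J s (B t zs) then 1 else (0::nat))" for s zs
    have sumle: "(\<Sum>t<N. if P t then 1 else (0::nat)) \<le> N" for N P
    proof -
      have "(\<Sum>t<N. if P t then 1 else (0::nat)) \<le> (\<Sum>t<N. 1)" by (rule sum_mono) simp
      then show ?thesis by simp
    qed
    show ?thesis unfolding Pol_satisfies_def
    proof (intro exI[of _ I] conjI)
      show "\<forall>s\<in>symbols \<Sigma>. I s \<in> Pol V E (ar s)"
      proof
        fix s assume s: "s \<in> symbols \<Sigma>"
        have vals: "\<forall>xs\<in>tuples V (ar s). I s xs \<in> V"
        proof
          fix xs show "I s xs \<in> V" unfolding I_def by (rule pV) (rule sumle)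
        qed
        have edges: "(I s xs, I s ys) \<in> E"
          if xs: "xs \<in> tuples V (ar s)" "ys \<in> tuples V (ar s)" "\<forall>i<ar s. (xs ! i, ys ! i) \<in> E" for xs ys
        proof -
          have len: "length xs = ar s" "length ys = ar s" using xs by (auto simp: tuples_def)
          have hy: "h (ys ! i) = Suc (h (xs ! i))" if "i < ar s" for i using h_edge xs(3) that by blast
          obtain K' where K': "K = Suc K'" using K1 by (cases K) auto
          have B0: "B 0 ys = replicate (ar s) True" by (rule nth_equalityI) (auto simp: B_def len hy)
          have BS: "B (Suc t) ys = B t xs" for t by (rule nth_equalityI) (auto simp: B_def len hy)
          have hxK: "h (xs ! i) \<le> K'" if "i < ar s" for i
          proof -
            have "ys ! i \<in> V" using xs(2) that len by (auto simp: tuples_def)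
            then have "h (ys ! i) \<le> K" by (rule hK)
            then show ?thesis using hy[OF that] K' by simp
          qed
          have BK: "B K' xs = replicate (ar s) False"
            by (rule nth_equalityI) (auto simp: B_def len not_less dest: hxK)
          have Sy: "(\<Sum>t<K. if J s (B t ys) then 1 else (0::nat)) = Suc (\<Sum>t<K'. if J s (B t xs) then 1 else 0)"
            unfolding K' sum.lessThan_Suc_shift using B0 BS J01[OF s] by simp
          have Sx: "(\<Sum>t<K. if J s (B t xs) then 1 else (0::nat)) = (\<Sum>t<K'. if J s (B t xs) then 1 else 0)"
            unfolding K' sum.lessThan_Suc using BK J01[OF s] by simp
          have lt: "(\<Sum>t<K'. if J s (B t xs) then 1 else (0::nat)) < K"
            using sumle[where N=K' and P="\<lambda>t. J s (B t xs)"] K' by simp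
          then show ?thesis using p(3) Sx Sy unfolding I_def by simp
        qed
        show "I s \<in> Pol V E (ar s)" unfolding Pol_def using vals edges by blast
      qed
      have eqs: "minor (I f) (ar f) \<sigma> xs = minor (I g) (ar g) \<tau> xs"
        if fe: "(f, \<sigma>, g, \<tau>, n) \<in> \<Sigma>" and xs: "xs \<in> tuples V n" for f \<sigma> g \<tau> n xs
      proof -
        have sf: "\<forall>i<ar f. \<sigma> i < n" "\<forall>i<ar g. \<tau> i < n"
          using mc fe unfolding minor_condition_def by auto
        have len: "length xs = n" using xs by (simp add: tuples_def)
        have Bf: "B t (map (\<lambda>i. xs ! \<sigma> i) [0..<ar f]) = map (\<lambda>i. B t xs ! \<sigma> i) [0..<ar f]" for t
          by (rule nth_equalityI) (auto simp: B_def len sf)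
        have Bg: "B t (map (\<lambda>i. xs ! \<tau> i) [0..<ar g]) = map (\<lambda>i. B t xs ! \<tau> i) [0..<ar g]" for t
          by (rule nth_equalityI) (auto simp: B_def len sf)
        have bt: "B t xs \<in> tuples P2_V n" for t by (simp add: tuples_def P2_V_def B_def len)
        have "minor (J f) (ar f) \<sigma> (B t xs) = minor (J g) (ar g) \<tau> (B t xs)" for t
          using Jeq fe bt by fastforce
        then have "J f (B t (map (\<lambda>i. xs ! \<sigma> i) [0..<ar f])) = J g (B t (map (\<lambda>i. xs ! \<tau> i) [0..<ar g]))" for t
          using Bf Bg by (simp add: minor_def)
        then show ?thesis by (simp add: minor_def I_def)
      qed
      show "\<forall>(f, \<sigma>, g, \<tau>, n)\<in>\<Sigma>. \<forall>xs\<in>tuples V n. minor (I f) (ar f) \<sigma> xs = minor (I g) (ar g) \<tau> xs"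
        apply clarify
        apply (rule eqs)
         apply assumption+
        done
    qed
  qed
qed

end
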